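(* Let $k:(0,\infty)\times(0,\infty)\to\mathbb{R}$ be a Borel-measurable kernel for which there exist $\alpha^*\in[0,1)$, $\varepsilon>0$ such that $\sup_{0<t\le T}t^{\alpha^*-\frac1{1+\varepsilon}}\|k(t,\cdot)\|_{L^{1+\varepsilon}((0,t))}<\infty$ for every $T>0$. Then for each $\lambda\in\mathbb{C}$ there exists a unique function $\Phi(\cdot,-\lambda):[0,\infty)\to\mathbb{C}$ whose restriction to $[0,T]$ belongs to $B_b([0,T],\mathbb{C})$ for every $T>0$ and which solves the Volterra equation $$\Phi(t,-\lambda)=1-\lambda\int_0^tk(t,s)\Phi(s,-\lambda)ds,\qquad t>0.$$ Moreover, $\lim_{t\searrow0}\Phi(t,-\lambda)=1$ locally uniformly in $\lambda\in\mathbb{C}$, $\Phi(t,\cdot)$ is entire for all $t\ge0$, and $\Phi(t,\lambda)=\sum_{n=0}^\infty c_n(t)\lambda^n$, where $c_0(t)=1$ for $t\ge0$ and, for $n\in\mathbb{N}$, $c_n(t)=\int_0^tk(t,s)c_{n-1}(s)ds$ for $t>0$ and $c_n(0)=0$.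
   Context: $B_b([0,T],\mathbb{C})$ denotes the Banach space of bounded Borel-measurable complex-valued functions on $[0,T]$ with the supremum norm. The value of the solution at $t=0$ is $1$ (consistent with the series). *)

theory Defs
  imports "HOL-Analysis.Analysis"
begin

definition volterra_int :: "(real \<Rightarrow> real \<Rightarrow> real) \<Rightarrow> (real \<Rightarrow> complex) \<Rightarrow> real \<Rightarrow> complex" where
  "volterra_int k f t = set_lebesgue_integral lborel {0<..<t} (\<lambda>s. complex_of_real (k t s) * f s)"

primrec coeff_c :: "(real \<Rightarrow> real \<Rightarrow> real) \<Rightarrow> nat \<Rightarrow> real \<Rightarrow> real" where
  "coeff_c k 0 t = 1"
| "coeff_c k (Suc n) t =
     (if t > 0 then set_lebesgue_integral lborel {0<..<t} (\<lambda>s. k t s * coeff_c k n s) else 0)"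

definition Bb :: "real \<Rightarrow> (real \<Rightarrow> complex) \<Rightarrow> bool" where
  "Bb T f \<longleftrightarrow> f \<in> borel_measurable (restrict_space borel {0..T}) \<and> bounded (f ` {0..T})"

definition volterra_sol :: "(real \<Rightarrow> real \<Rightarrow> real) \<Rightarrow> complex \<Rightarrow> (real \<Rightarrow> complex) \<Rightarrow> bool" where
  "volterra_sol k lam phi \<longleftrightarrow>
     (\<forall>T>0. Bb T phi) \<and> phi 0 = 1 \<and>
     (\<forall>t>0. phi t = 1 - lam * volterra_int k phi t)"

end

theory Submission imports Defs "HOL-Real_Asymp.Real_Asymp" begin

lemma holder_aux:
  fixes f g :: "'a \<Rightarrow> real"
  assumes p: "p > 1" and q: "q > 1" and pq: "1/p + 1/q = 1" and A: "A > 0" and B: "B > 0"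
    and fm: "f \<in> borel_measurable M" and gm: "g \<in> borel_measurable M"
    and fi: "integrable M (\<lambda>x. \<bar>f x\<bar> powr p)" and gi: "integrable M (\<lambda>x. \<bar>g x\<bar> powr q)"
    and fb: "(\<integral>x. \<bar>f x\<bar> powr p \<partial>M) \<le> A powr p"
    and gb: "(\<integral>x. \<bar>g x\<bar> powr q \<partial>M) \<le> B powr q"
  shows "integrable M (\<lambda>x. f x * g x) \<and> (\<integral>x. \<bar>f x * g x\<bar> \<partial>M) \<le> A * B"
proof -
  define h where "h x = A * B * (\<bar>f x\<bar> powr p / (p * A powr p) + \<bar>g x\<bar> powr q / (q * B powr q))" for x
  have pt: "\<bar>f x * g x\<bar> \<le> h x" for x
  proof -
    have "(\<bar>f x\<bar>/A) * (\<bar>g x\<bar>/B) \<le> (\<bar>f x\<bar>/A) powr p / p + (\<bar>g x\<bar>/B) powr q / q"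
      by (rule Youngs_inequality) (use p q pq A B in auto)
    also have "\<dots> = \<bar>f x\<bar> powr p / (p * A powr p) + \<bar>g x\<bar> powr q / (q * B powr q)"
      using A B by (simp add: powr_divide mult.commute)
    finally have "(\<bar>f x\<bar>/A) * (\<bar>g x\<bar>/B) \<le> \<bar>f x\<bar> powr p / (p * A powr p) + \<bar>g x\<bar> powr q / (q * B powr q)" .
    hence "A * B * ((\<bar>f x\<bar>/A) * (\<bar>g x\<bar>/B)) \<le> h x"
      unfolding h_def using A B by (intro mult_left_mono) auto
    thus ?thesis using A B by (simp add: abs_mult)
  qed
  have hi: "integrable M h" unfolding h_def using fi gi by auto
  have fgi: "integrable M (\<lambda>x. f x * g x)"
    by (rule Bochner_Integration.integrable_bound[OF hi]) (use fm gm pt in \<open>auto intro!: AE_I2 order.trans[OF _ abs_ge_self]\<close>)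
  have "(\<integral>x. \<bar>f x * g x\<bar> \<partial>M) \<le> integral\<^sup>L M h"
    by (rule integral_mono) (use fgi hi pt in auto)
  also have "integral\<^sup>L M h = A * B * ((\<integral>x. \<bar>f x\<bar> powr p \<partial>M) / (p * A powr p) + (\<integral>x. \<bar>g x\<bar> powr q \<partial>M) / (q * B powr q))"
    unfolding h_def using fi gi by simp
  also have "\<dots> \<le> A * B * (A powr p / (p * A powr p) + B powr q / (q * B powr q))"
    using A B p q fb gb by (intro mult_left_mono add_mono divide_right_mono) auto
  also have "\<dots> = A * B" using A B p q pq by simp
  finally show ?thesis using fgi by simp
qed

lemma powr_int:
  fixes a t :: real
  assumes a: "a \<ge> 0" and t: "t > 0"
  shows "integrable lborel (\<lambda>s. indicator {0<..<t} s * s powr a)"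
    "(\<integral>s. indicator {0<..<t} s * s powr a \<partial>lborel) = t powr (a+1) / (a+1)"
proof -
  have bi: "integrable lborel (\<lambda>s. t powr a * indicator {0<..<t} s :: real)"
    using t by (intro integrable_mult_right integrable_real_indicator) auto
  show ii: "integrable lborel (\<lambda>s. indicator {0<..<t} s * s powr a)"
  proof (rule Bochner_Integration.integrable_bound[OF bi])
    show "(\<lambda>s. indicator {0<..<t} s * s powr a) \<in> borel_measurable lborel" by measurable
    show "AE x in lborel. norm (indicator {0<..<t} x * x powr a) \<le> norm (t powr a * indicator {0<..<t} x :: real)"
      using a t by (intro AE_I2) (auto simp: indicator_def intro: powr_mono2)
  qed
  have si: "set_integrable lborel {0<..<t} (\<lambda>s. s powr a)"
    using ii unfolding set_integrable_def by (simp add: mult.commute)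
  have "(\<integral>s. indicator {0<..<t} s * s powr a \<partial>lborel) = (LINT s:{0<..<t}|lborel. s powr a)"
    unfolding set_lebesgue_integral_def by simp
  also have "\<dots> = integral {0<..<t} (\<lambda>s. s powr a)"
    by (rule set_borel_integral_eq_integral(2)[OF si])
  also have "\<dots> = integral {0..t} (\<lambda>s. s powr a)" by (simp add: integral_open_interval_real)
  also have "\<dots> = t powr (a+1) / (a+1)"
    using has_integral_powr_from_0[of a t] a t by (simp add: integral_unique)
  finally show "(\<integral>s. indicator {0<..<t} s * s powr a \<partial>lborel) = t powr (a+1) / (a+1)" .
qed

primrec aseq :: "real \<Rightarrow> real \<Rightarrow> real \<Rightarrow> nat \<Rightarrow> real" where
  "aseq C b q 0 = 1"
| "aseq C b q (Suc n) = C * (real n * b * q + 1) powr (-1/q) * aseq C b q n"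

lemma aseq_pos: "C > 0 \<Longrightarrow> b \<ge> 0 \<Longrightarrow> q \<ge> 0 \<Longrightarrow> aseq C b q n > 0"
proof (induction n)
  case (Suc n)
  have "real n * b * q \<ge> 0" using Suc.prems by simp
  hence "real n * b * q + 1 \<noteq> 0" by linarith
  thus ?case using Suc by (auto intro!: mult_pos_pos)
qed simp

lemma aseq_summable:
  assumes C: "C > 0" and b: "b > 0" and q: "q > 0" and x: "x \<ge> 0"
  shows "summable (\<lambda>n. aseq C b q n * x ^ n)"
proof -
  have lim: "((\<lambda>n. (real n * b * q + 1) powr (-1/q)) \<longlongrightarrow> 0) sequentially"
  proof (rule tendsto_neg_powr)
    show "-1/q < 0" using q by simp
    show "filterlim (\<lambda>n. real n * b * q + 1) at_top sequentially"
      using b q by real_asymp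
  qed
  have "eventually (\<lambda>n. (real n * b * q + 1) powr (-1/q) < 1 / (2 * (C * x + 1))) sequentially"
    by (rule order_tendstoD(2)[OF lim]) (use C x in \<open>auto intro!: divide_pos_pos add_nonneg_pos\<close>)
  then obtain N where N: "\<And>n. n \<ge> N \<Longrightarrow> (real n * b * q + 1) powr (-1/q) < 1 / (2 * (C * x + 1))"
    by (auto simp: eventually_sequentially)
  show ?thesis
  proof (rule summable_ratio_test[of "1/2" N])
    fix n assume n: "n \<ge> N"
    have pos: "aseq C b q n * x ^ n \<ge> 0" using aseq_pos[OF C, of b q n] x b q by simp
    have "C * x * (real n * b * q + 1) powr (-1/q) \<le> C * x * (1 / (2 * (C * x + 1)))"
      using N[OF n] C x by (intro mult_left_mono) auto
    also have "\<dots> \<le> 1/2" using C x by (simp add: divide_simps) (smt (verit) mult_nonneg_nonneg)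
    finally have *: "C * x * (real n * b * q + 1) powr (-1/q) \<le> 1/2" .
    have "norm (aseq C b q (Suc n) * x ^ Suc n) = (C * x * (real n * b * q + 1) powr (-1/q)) * (aseq C b q n * x ^ n)"
      using aseq_pos[OF C, of b q n] C x b q by (simp add: abs_mult mult_ac)
    also have "\<dots> \<le> 1/2 * (aseq C b q n * x ^ n)"
      by (rule mult_right_mono[OF * pos])
    finally show "norm (aseq C b q (Suc n) * x ^ Suc n) \<le> 1/2 * norm (aseq C b q n * x ^ n)"
      using pos by simp
  qed simp
qed

locale volt =
  fixes k :: "real \<Rightarrow> real \<Rightarrow> real" and \<alpha> \<epsilon> :: real
  assumes meas: "(\<lambda>p. k (fst p) (snd p)) \<in> borel_measurable (restrict_space borel ({0<..} \<times> {0<..}))"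
    and a0: "0 \<le> \<alpha>" and a1: "\<alpha> < 1" and e0: "\<epsilon> > 0"
    and growth: "\<forall>T>0. \<exists>C. \<forall>t\<in>{0<..T}.
          set_integrable lborel {0<..<t} (\<lambda>s. \<bar>k t s\<bar> powr (1 + \<epsilon>)) \<and>
          t powr (\<alpha> - 1 / (1 + \<epsilon>)) *
            (set_lebesgue_integral lborel {0<..<t} (\<lambda>s. \<bar>k t s\<bar> powr (1 + \<epsilon>))) powr (1 / (1 + \<epsilon>))
          \<le> C"
begin

abbreviation "pp \<equiv> 1 + \<epsilon>"
abbreviation "qq \<equiv> (1 + \<epsilon>) / \<epsilon>"
abbreviation "\<beta> \<equiv> 1 - \<alpha>"

lemma pq: "pp > 1" "qq > 1" "1/pp + 1/qq = 1" "\<beta> > 0"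
  using e0 a1 by (auto simp: field_simps)

definition kk :: "real \<Rightarrow> real \<Rightarrow> real" where
  "kk t s = (if 0 < s \<and> s < t then k t s else 0)"

definition CP :: "real \<Rightarrow> real \<Rightarrow> bool" where
  "CP T C \<longleftrightarrow> C > 0 \<and> (\<forall>t\<in>{0<..T}.
          set_integrable lborel {0<..<t} (\<lambda>s. \<bar>k t s\<bar> powr (1 + \<epsilon>)) \<and>
          t powr (\<alpha> - 1 / (1 + \<epsilon>)) *
            (set_lebesgue_integral lborel {0<..<t} (\<lambda>s. \<bar>k t s\<bar> powr (1 + \<epsilon>))) powr (1 / (1 + \<epsilon>))
          \<le> C)"

definition Cb :: "real \<Rightarrow> real" where
  "Cb T = (SOME C. CP T C)"

lemma Cb: assumes "T > 0" shows "Cb T > 0" "\<And>t. t\<in>{0<..T} \<Longrightarrow>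
          set_integrable lborel {0<..<t} (\<lambda>s. \<bar>k t s\<bar> powr (1 + \<epsilon>)) \<and>
          t powr (\<alpha> - 1 / (1 + \<epsilon>)) *
            (set_lebesgue_integral lborel {0<..<t} (\<lambda>s. \<bar>k t s\<bar> powr (1 + \<epsilon>))) powr (1 / (1 + \<epsilon>))
          \<le> Cb T"
proof -
  obtain C where C: "\<forall>t\<in>{0<..T}.
          set_integrable lborel {0<..<t} (\<lambda>s. \<bar>k t s\<bar> powr (1 + \<epsilon>)) \<and>
          t powr (\<alpha> - 1 / (1 + \<epsilon>)) *
            (set_lebesgue_integral lborel {0<..<t} (\<lambda>s. \<bar>k t s\<bar> powr (1 + \<epsilon>))) powr (1 / (1 + \<epsilon>))
          \<le> C" using growth assms by blast
  have "CP T (max C 1)" unfolding CP_def using C by fastforce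
  hence "CP T (Cb T)" unfolding Cb_def by (rule someI)
  thus "Cb T > 0" "\<And>t. t\<in>{0<..T} \<Longrightarrow>
          set_integrable lborel {0<..<t} (\<lambda>s. \<bar>k t s\<bar> powr (1 + \<epsilon>)) \<and>
          t powr (\<alpha> - 1 / (1 + \<epsilon>)) *
            (set_lebesgue_integral lborel {0<..<t} (\<lambda>s. \<bar>k t s\<bar> powr (1 + \<epsilon>))) powr (1 / (1 + \<epsilon>))
          \<le> Cb T"
    unfolding CP_def by auto
qed

lemma kk_meas_borel: "(\<lambda>x. kk (fst x) (snd x)) \<in> borel_measurable borel"
proof -
  have o1: "open ({0<..} \<times> {0<..} :: (real \<times> real) set)" by (intro open_Times) auto
  have m1: "(\<lambda>x. indicator ({0<..} \<times> {0<..}) x *\<^sub>R k (fst x) (snd x)) \<in> borel_measurable (borel :: (real \<times> real) measure)"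
    using borel_measurable_restrict_space_iff[THEN iffD1, OF _ meas] o1 by auto
  have o2: "open {x::real \<times> real. 0 < snd x \<and> snd x < fst x}"
    by (intro open_Collect_conj open_Collect_less continuous_intros)
  have m2: "(\<lambda>x. indicator {x::real \<times> real. 0 < snd x \<and> snd x < fst x} x :: real) \<in> borel_measurable borel"
    using o2 by (intro borel_measurable_indicator) auto
  have eq: "(\<lambda>x. kk (fst x) (snd x)) = (\<lambda>x. indicator {x::real \<times> real. 0 < snd x \<and> snd x < fst x} x * (indicator ({0<..} \<times> {0<..}) x *\<^sub>R k (fst x) (snd x)))"
    by (auto simp: kk_def indicator_def fun_eq_iff)
  show ?thesis unfolding eq using m1 m2 by measurable
qed

lemma kk_meas_pair: "(\<lambda>x. kk (fst x) (snd x)) \<in> borel_measurable (borel \<Otimes>\<^sub>M lborel)"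
proof -
  have "sets (borel \<Otimes>\<^sub>M lborel) = sets (borel \<Otimes>\<^sub>M (borel :: real measure))"
    by (intro sets_pair_measure_cong) auto
  also have "\<dots> = sets (borel :: (real \<times> real) measure)" by (subst borel_prod) (rule refl)
  finally show ?thesis using kk_meas_borel by (simp cong: measurable_cong_sets)
qed

lemma kk_meas [measurable]: "kk t \<in> borel_measurable lborel" "kk t \<in> borel_measurable borel"
proof -
  have "(\<lambda>s. (t, s)) \<in> borel_measurable (borel :: real measure)"
    by (intro borel_measurable_continuous_onI continuous_intros)
  hence "(\<lambda>s. (t, s)) \<in> borel_measurable (lborel :: real measure)" by simp
  from measurable_compose[OF this kk_meas_borel] show "kk t \<in> borel_measurable lborel" by simp
  thus "kk t \<in> borel_measurable borel" by simp
qed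

lemma KB:
  assumes T: "T > 0" and t: "0 < t" "t \<le> T" and r: "r \<ge> 0"
  shows "integrable lborel (\<lambda>s. \<bar>kk t s\<bar> * s powr r)"
    "(\<integral>s. \<bar>kk t s\<bar> * s powr r \<partial>lborel) \<le> Cb T * t powr (r + \<beta>) * (r * qq + 1) powr (-1/qq)"
proof -
  note pqs = pq
  define A where "A = Cb T * t powr (1/pp - \<alpha>)"
  define B where "B = (t powr (r*qq+1) / (r*qq+1)) powr (1/qq)"
  define g where "g s = indicator {0<..<t} s * s powr r" for s
  define I where "I = (set_lebesgue_integral lborel {0<..<t} (\<lambda>s. \<bar>k t s\<bar> powr (1 + \<epsilon>)))"
  have C0: "Cb T > 0" using Cb(1)[OF T] .
  have CC: "set_integrable lborel {0<..<t} (\<lambda>s. \<bar>k t s\<bar> powr (1 + \<epsilon>))"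
     "t powr (\<alpha> - 1 / (1 + \<epsilon>)) * I powr (1 / (1 + \<epsilon>)) \<le> Cb T"
    using Cb(2)[OF T, of t] t unfolding I_def by auto
  have rq: "r * qq + 1 > 0" using r pqs by (simp add: add_nonneg_pos)
  have A0: "A > 0" unfolding A_def using C0 t by simp
  have B0: "B > 0" unfolding B_def using t rq by simp
  have kp: "\<bar>kk t s\<bar> powr pp = indicator {0<..<t} s *\<^sub>R \<bar>k t s\<bar> powr (1 + \<epsilon>)" for s
    using e0 by (auto simp: kk_def indicator_def)
  have fi: "integrable lborel (\<lambda>s. \<bar>kk t s\<bar> powr pp)"
    using CC(1) unfolding set_integrable_def kp .
  have I0: "I \<ge> 0" unfolding I_def set_lebesgue_integral_def
    by (intro Bochner_Integration.integral_nonneg) (auto simp: indicator_def)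
  have tt: "t powr (\<alpha> - 1/pp) * t powr (1/pp - \<alpha>) = 1"
    using t by (simp add: powr_add[symmetric])
  have "I powr (1/pp) = (t powr (\<alpha> - 1/pp) * I powr (1/pp)) * t powr (1/pp - \<alpha>)"
    by (metis tt mult.commute mult.left_commute mult_1_right)
  also have "\<dots> \<le> A" unfolding A_def using CC(2) t by (intro mult_right_mono) auto
  finally have "I powr (1/pp) \<le> A" .
  hence "(I powr (1/pp)) powr pp \<le> A powr pp" using pqs by (intro powr_mono2) auto
  hence fb: "(\<integral>s. \<bar>kk t s\<bar> powr pp \<partial>lborel) \<le> A powr pp"
    using I0 pqs unfolding kp I_def set_lebesgue_integral_def by (simp add: powr_powr)
  have gq: "\<bar>g s\<bar> powr qq = indicator {0<..<t} s * s powr (r * qq)" for s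
    unfolding g_def using pqs by (auto simp: indicator_def powr_powr)
  have gi: "integrable lborel (\<lambda>s. \<bar>g s\<bar> powr qq)"
    unfolding gq using powr_int(1)[of "r*qq" t] r pqs t by simp
  have gb: "(\<integral>s. \<bar>g s\<bar> powr qq \<partial>lborel) \<le> B powr qq"
    unfolding gq B_def using powr_int(2)[of "r*qq" t] r pqs t rq by (simp add: powr_powr)
  have H: "integrable lborel (\<lambda>s. kk t s * g s) \<and> (\<integral>s. \<bar>kk t s * g s\<bar> \<partial>lborel) \<le> A * B"
    by (rule holder_aux[OF pqs(1-3) A0 B0 _ _ fi gi fb gb]) (auto simp: g_def)
  have eq1: "\<bar>kk t s * g s\<bar> = \<bar>kk t s\<bar> * s powr r" for s
    unfolding g_def by (auto simp: kk_def indicator_def abs_mult)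
  show "integrable lborel (\<lambda>s. \<bar>kk t s\<bar> * s powr r)"
    using integrable_abs[OF H[THEN conjunct1]] unfolding eq1 .
  have "(\<integral>s. \<bar>kk t s\<bar> * s powr r \<partial>lborel) \<le> A * B" using H unfolding eq1 by simp
  also have "A * B = Cb T * t powr (r + \<beta>) * (r * qq + 1) powr (-1/qq)"
  proof -
    have "B = t powr (r + 1/qq) * (r * qq + 1) powr (-1/qq)"
    proof -
        have q0: "qq > 0" using pqs by simp
        have "B = (t powr (r*qq+1)) powr (1/qq) / (r*qq+1) powr (1/qq)"
          unfolding B_def using t rq by (simp add: powr_divide)
        also have "(t powr (r*qq+1)) powr (1/qq) = t powr (r + 1/qq)"
          using q0 by (simp add: powr_powr add_divide_distrib)
        finally show ?thesis by (simp add: powr_minus_divide)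
      qed
    hence "A * B = Cb T * (t powr (1/pp - \<alpha>) * t powr (r + 1/qq)) * (r * qq + 1) powr (-1/qq)"
      unfolding A_def by (simp add: mult_ac)
    also have "t powr (1/pp - \<alpha>) * t powr (r + 1/qq) = t powr (r + \<beta>)"
      proof -
        have e: "1/pp - \<alpha> + (r + 1/qq) = r + \<beta>" using pqs(3) by linarith
        show ?thesis by (subst powr_add[symmetric]) (subst e, rule refl)
      qed
    finally show ?thesis .
  qed
  finally show "(\<integral>s. \<bar>kk t s\<bar> * s powr r \<partial>lborel) \<le> Cb T * t powr (r + \<beta>) * (r * qq + 1) powr (-1/qq)" .
qed

lemma kk_int_bound:
  fixes f :: "real \<Rightarrow> 'a::{banach, second_countable_topology}"
  assumes T: "T > 0" and t: "0 < t" "t \<le> T" and r: "r \<ge> 0" and M: "M \<ge> 0"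
    and fm: "f \<in> borel_measurable lborel"
    and fb: "\<And>s. 0 < s \<Longrightarrow> s < t \<Longrightarrow> norm (f s) \<le> M * s powr r"
  shows "integrable lborel (\<lambda>s. kk t s *\<^sub>R f s)"
    "norm (\<integral>s. kk t s *\<^sub>R f s \<partial>lborel) \<le> M * (Cb T * t powr (r + \<beta>) * (r * qq + 1) powr (-1/qq))"
proof -
  have gi: "integrable lborel (\<lambda>s. M * (\<bar>kk t s\<bar> * s powr r))"
    using KB(1)[OF T t r] by simp
  have pt: "norm (kk t s *\<^sub>R f s) \<le> M * (\<bar>kk t s\<bar> * s powr r)" for s
  proof (cases "0 < s \<and> s < t")
    case True
    have "norm (kk t s *\<^sub>R f s) = \<bar>kk t s\<bar> * norm (f s)" by simp
    also have "\<dots> \<le> \<bar>kk t s\<bar> * (M * s powr r)" using fb True by (intro mult_left_mono) auto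
    finally show ?thesis by (simp add: mult_ac)
  next
    case False thus ?thesis by (auto simp: kk_def)
  qed
  show fi: "integrable lborel (\<lambda>s. kk t s *\<^sub>R f s)"
    by (rule Bochner_Integration.integrable_bound[OF gi]) (use fm pt in \<open>auto intro!: AE_I2 order.trans[OF _ abs_ge_self]\<close>)
  have "norm (\<integral>s. kk t s *\<^sub>R f s \<partial>lborel) \<le> (\<integral>s. M * (\<bar>kk t s\<bar> * s powr r) \<partial>lborel)"
    by (rule Bochner_Integration.integral_norm_bound_integral[OF fi gi pt])
  also have "\<dots> = M * (\<integral>s. \<bar>kk t s\<bar> * s powr r \<partial>lborel)" by simp
  also have "\<dots> \<le> M * (Cb T * t powr (r + \<beta>) * (r * qq + 1) powr (-1/qq))"
    using KB(2)[OF T t r] M by (intro mult_left_mono) auto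
  finally show "norm (\<integral>s. kk t s *\<^sub>R f s \<partial>lborel) \<le> M * (Cb T * t powr (r + \<beta>) * (r * qq + 1) powr (-1/qq))" .
qed

abbreviation "c \<equiv> coeff_c k"

lemma c_Suc: "c (Suc n) t = (\<integral>s. kk t s * c n s \<partial>lborel)"
proof (cases "t > 0")
  case True
  thus ?thesis unfolding coeff_c.simps set_lebesgue_integral_def
    by (auto intro!: Bochner_Integration.integral_cong simp: kk_def indicator_def)
next
  case False
  hence "kk t s = 0" for s by (auto simp: kk_def)
  thus ?thesis using False by simp
qed

lemma c_meas [measurable]: "c n \<in> borel_measurable borel"
proof (induction n)
  case 0 thus ?case by simp
next
  case (Suc n)
  have cm: "c n \<in> borel_measurable lborel" using Suc by simp
  have "(\<lambda>x. kk (fst x) (snd x) * c n (snd x)) \<in> borel_measurable (borel \<Otimes>\<^sub>M lborel)"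
    using kk_meas_pair cm by measurable
  hence "(\<lambda>t. \<integral>s. kk t s * c n s \<partial>lborel) \<in> borel_measurable borel"
    by (intro lborel.borel_measurable_lebesgue_integral) (simp add: case_prod_beta')
  thus ?case by (simp add: c_Suc[abs_def])
qed

lemma c_meas' [measurable]: "c n \<in> borel_measurable lborel" by simp

lemma cbound:
  assumes T: "T > 0"
  shows "\<And>t. 0 < t \<Longrightarrow> t \<le> T \<Longrightarrow> \<bar>c n t\<bar> \<le> aseq (Cb T) \<beta> qq n * t powr (real n * \<beta>)"
proof (induction n)
  case 0 thus ?case by simp
next
  case (Suc n t)
  have C0: "Cb T > 0" using Cb(1)[OF T] .
  have an: "aseq (Cb T) \<beta> qq n \<ge> 0" using aseq_pos[OF C0, of \<beta> qq n] pq by simp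
  have r: "real n * \<beta> \<ge> 0" using pq by simp
  have "norm (\<integral>s. kk t s *\<^sub>R c n s \<partial>lborel) \<le> aseq (Cb T) \<beta> qq n *
     (Cb T * t powr (real n * \<beta> + \<beta>) * (real n * \<beta> * qq + 1) powr (-1/qq))"
    by (rule kk_int_bound(2)[OF T Suc.prems r an]) (use Suc.IH Suc.prems in auto)
  also have "\<dots> = aseq (Cb T) \<beta> qq (Suc n) * t powr (real (Suc n) * \<beta>)"
    by (simp add: algebra_simps)
  finally show ?case by (simp del: coeff_c.simps add: c_Suc)
qed

lemma cbound2:
  assumes T: "T > 0" and t: "t \<le> T"
  shows "\<bar>c n t\<bar> \<le> aseq (Cb T) \<beta> qq n * (T powr \<beta>) ^ n"
proof (cases n)
  case 0 thus ?thesis by simp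
next
  case (Suc m)
  have C0: "Cb T > 0" using Cb(1)[OF T] .
  have an: "aseq (Cb T) \<beta> qq n > 0" using aseq_pos[OF C0, of \<beta> qq n] pq by simp
  show ?thesis
  proof (cases "t > 0")
    case False
    hence "kk t s = 0" for s by (auto simp: kk_def)
    hence "c n t = 0" using Suc by (simp del: coeff_c.simps add: c_Suc)
    thus ?thesis using an T by simp
  next
    case True
    have "\<bar>c n t\<bar> \<le> aseq (Cb T) \<beta> qq n * t powr (real n * \<beta>)" using cbound[OF T True t] .
    also have "\<dots> \<le> aseq (Cb T) \<beta> qq n * T powr (real n * \<beta>)"
      using an True t pq by (intro mult_left_mono powr_mono2) auto
    also have "T powr (real n * \<beta>) = (T powr \<beta>) ^ n" using T by (simp add: powr_power)
    finally show ?thesis .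
  qed
qed

definition Phi :: "real \<Rightarrow> complex \<Rightarrow> complex" where
  "Phi t \<mu> = (\<Sum>n. complex_of_real (c n t) * \<mu> ^ n)"

lemma aseqT_summable: "T > 0 \<Longrightarrow> x \<ge> 0 \<Longrightarrow> summable (\<lambda>n. aseq (Cb T) \<beta> qq n * x ^ n)"
  by (rule aseq_summable) (use Cb(1) pq in auto)

lemma aseqT_nonneg: "T > 0 \<Longrightarrow> aseq (Cb T) \<beta> qq n \<ge> 0"
  using aseq_pos[OF Cb(1), of T \<beta> qq n] pq by simp

lemma term_bound:
  assumes T: "T > 0" and t: "t \<le> T"
  shows "norm (complex_of_real (c n t) * \<mu> ^ n) \<le> aseq (Cb T) \<beta> qq n * (T powr \<beta> * norm \<mu>) ^ n"
proof -
  have "norm (complex_of_real (c n t) * \<mu> ^ n) = \<bar>c n t\<bar> * norm \<mu> ^ n" by (simp add: norm_mult norm_power)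
  also have "\<dots> \<le> aseq (Cb T) \<beta> qq n * (T powr \<beta>) ^ n * norm \<mu> ^ n"
    by (intro mult_right_mono cbound2[OF T t]) auto
  finally show ?thesis by (simp add: power_mult_distrib mult_ac)
qed

lemma Phi_sums_T:
  assumes T: "T > 0" and t: "t \<le> T"
  shows "summable (\<lambda>n. complex_of_real (c n t) * \<mu> ^ n)"
  by (rule summable_comparison_test'[OF aseqT_summable[OF T, of "T powr \<beta> * norm \<mu>"] term_bound[OF T t]]) auto

lemma Phi_sums: "(\<lambda>n. complex_of_real (c n t) * \<mu> ^ n) sums Phi t \<mu>"
  unfolding Phi_def by (rule summable_sums, rule Phi_sums_T[of "max t 1"]) auto

lemma Phi_bound:
  assumes T: "T > 0" and t: "t \<le> T"
  shows "norm (Phi t \<mu>) \<le> (\<Sum>n. aseq (Cb T) \<beta> qq n * (T powr \<beta> * norm \<mu>) ^ n)"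
  unfolding Phi_def by (rule norm_suminf_le[OF term_bound[OF T t] aseqT_summable[OF T]]) auto

lemma Phi_holo: "Phi t holomorphic_on UNIV"
proof -
  have eq: "Phi t = (\<lambda>x. \<Sum>n. complex_of_real (c n t) * x ^ n)" by (simp add: Phi_def fun_eq_iff)
  have "((\<lambda>x. \<Sum>n. complex_of_real (c n t) * x ^ n) has_field_derivative
          (\<Sum>n. diffs (\<lambda>n. complex_of_real (c n t)) n * x ^ n)) (at x)" for x
    by (rule termdiffs_strong_converges_everywhere) (rule Phi_sums_T[of "max t 1"], auto)
  thus ?thesis unfolding eq holomorphic_on_def field_differentiable_def
    by (metis has_field_derivative_at_within)
qed

lemma c_nonpos: "t \<le> 0 \<Longrightarrow> c (Suc n) t = 0"
proof -
  assume "t \<le> 0"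
  hence "kk t s = 0" for s by (auto simp: kk_def)
  thus ?thesis by (simp del: coeff_c.simps add: c_Suc)
qed

lemma Phi_nonpos: assumes "t \<le> 0" shows "Phi t \<mu> = 1"
proof -
  have "(\<lambda>n. complex_of_real (c n t) * \<mu> ^ n) = (\<lambda>n. if n = 0 then 1 else 0)"
    using c_nonpos[OF assms] by (auto simp: fun_eq_iff gr0_conv_Suc not0_implies_Suc)
  hence "(\<lambda>n. complex_of_real (c n t) * \<mu> ^ n) sums 1"
    using sums_single[of 0 "\<lambda>_. 1::complex"] by simp
  thus ?thesis using Phi_sums sums_unique2 by blast
qed

lemma Phi_meas [measurable]: "(\<lambda>t. Phi t \<mu>) \<in> borel_measurable borel"
proof (rule borel_measurable_LIMSEQ_metric)
  show "(\<lambda>t. \<Sum>n<i. complex_of_real (c n t) * \<mu> ^ n) \<in> borel_measurable borel" for i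
    by measurable
  show "(\<lambda>i. \<Sum>n<i. complex_of_real (c n t) * \<mu> ^ n) \<longlonglongrightarrow> Phi t \<mu>" for t
    using Phi_sums[of t \<mu>] unfolding sums_def .
qed

lemma vi_eq: "volterra_int k f t = (\<integral>s. complex_of_real (kk t s) * f s \<partial>lborel)"
  unfolding volterra_int_def set_lebesgue_integral_def
  by (intro Bochner_Integration.integral_cong) (auto simp: kk_def indicator_def)

lemma kk_abs_int: assumes t: "t > 0" shows "integrable lborel (\<lambda>s. \<bar>kk t s\<bar>)"
proof -
  have "\<bar>kk t s\<bar> * s powr 0 = \<bar>kk t s\<bar>" for s by (cases "s = 0") (auto simp: kk_def)
  hence eqf: "(\<lambda>s. \<bar>kk t s\<bar> * s powr 0) = (\<lambda>s. \<bar>kk t s\<bar>)" by (rule ext)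
  show ?thesis using KB(1)[OF t t order.refl order.refl] unfolding eqf .
qed

lemma Phi_eq:
  assumes t: "t > 0"
  shows "Phi t \<mu> = 1 + \<mu> * (\<integral>s. complex_of_real (kk t s) * Phi s \<mu> \<partial>lborel)"
proof -
  define F where "F n s = complex_of_real (kk t s * c n s) * \<mu> ^ n" for n s
  define a where "a n = aseq (Cb t) \<beta> qq n * (t powr \<beta> * norm \<mu>) ^ n" for n
  have asum: "summable a" unfolding a_def by (rule aseqT_summable[OF t]) auto
  have a0: "a n \<ge> 0" for n unfolding a_def using aseqT_nonneg[OF t] by simp
  have Fi: "integrable lborel (F n)" for n
  proof -
    have r: "(0::real) \<le> real n * \<beta>" using pq by simp
    have "integrable lborel (\<lambda>s. kk t s *\<^sub>R c n s)"
      by (rule kk_int_bound(1)[OF t t order.refl r aseqT_nonneg[OF t, of n]]) (use cbound[OF t] in auto)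
    hence "integrable lborel (\<lambda>s. complex_of_real (kk t s * c n s))"
      by (intro integrable_of_real) simp
    thus ?thesis unfolding F_def by (intro integrable_mult_left)
  qed
  have Fn: "norm (F n s) \<le> \<bar>kk t s\<bar> * a n" for n s
  proof (cases "kk t s = 0")
    case True thus ?thesis using a0[of n] by (simp add: F_def)
  next
    case False
    hence "s < t" by (auto simp: kk_def split: if_splits)
    have "norm (F n s) = \<bar>kk t s\<bar> * norm (complex_of_real (c n s) * \<mu> ^ n)"
      unfolding F_def by (simp add: norm_mult)
    also have "\<dots> \<le> \<bar>kk t s\<bar> * a n" unfolding a_def
      by (intro mult_left_mono term_bound[OF t]) (use \<open>s < t\<close> in auto)
    finally show ?thesis .
  qed
  have sum1: "AE s in lborel. summable (\<lambda>n. norm (F n s))"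
    by (intro AE_I2 summable_comparison_test'[OF summable_mult[OF asum, of "\<bar>kk t s\<bar>" for s]]) (use Fn in auto)
  have sum2: "summable (\<lambda>n. \<integral>s. norm (F n s) \<partial>lborel)"
  proof (rule summable_comparison_test'[OF summable_mult2[OF asum, of "\<integral>s. \<bar>kk t s\<bar> \<partial>lborel"]])
    fix n
    have "(\<integral>s. norm (F n s) \<partial>lborel) \<le> (\<integral>s. \<bar>kk t s\<bar> * a n \<partial>lborel)"
      by (intro integral_mono integrable_norm Fi) (use kk_abs_int[OF t] Fn in auto)
    thus "norm (\<integral>s. norm (F n s) \<partial>lborel) \<le> a n * (\<integral>s. \<bar>kk t s\<bar> \<partial>lborel)"
      by (simp add: mult.commute)
  qed
  have S: "(\<lambda>n. integral\<^sup>L lborel (F n)) sums (\<integral>s. (\<Sum>n. F n s) \<partial>lborel)"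
    by (rule sums_integral[OF Fi sum1 sum2])
  have e1: "integral\<^sup>L lborel (F n) = complex_of_real (c (Suc n) t) * \<mu> ^ n" for n
  proof -
    have "integral\<^sup>L lborel (F n) = (\<integral>s. complex_of_real (kk t s * c n s) \<partial>lborel) * \<mu> ^ n"
      unfolding F_def by (rule integral_mult_left_zero)
    also have "(\<integral>s. complex_of_real (kk t s * c n s) \<partial>lborel) = complex_of_real (\<integral>s. kk t s * c n s \<partial>lborel)"
      by (rule integral_complex_of_real)
    finally show ?thesis by (simp del: coeff_c.simps add: c_Suc)
  qed
  have e2: "(\<Sum>n. F n s) = complex_of_real (kk t s) * Phi s \<mu>" for s
  proof -
    have "(\<lambda>n. complex_of_real (kk t s) * (complex_of_real (c n s) * \<mu> ^ n)) sums (complex_of_real (kk t s) * Phi s \<mu>)"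
      by (rule sums_mult[OF Phi_sums])
    thus ?thesis unfolding F_def by (simp add: sums_iff mult_ac)
  qed
  define V where "V = (\<integral>s. complex_of_real (kk t s) * Phi s \<mu> \<partial>lborel)"
  have "(\<lambda>n. complex_of_real (c (Suc n) t) * \<mu> ^ n) sums V"
    using S unfolding e1 e2 V_def .
  hence "(\<lambda>n. \<mu> * (complex_of_real (c (Suc n) t) * \<mu> ^ n)) sums (\<mu> * V)"
    by (rule sums_mult)
  hence "(\<lambda>n. complex_of_real (c (Suc n) t) * \<mu> ^ (Suc n)) sums (\<mu> * V)"
    by (simp add: mult_ac)
  hence "(\<lambda>n. complex_of_real (c n t) * \<mu> ^ n) sums (\<mu> * V + 1)"
    by (subst (asm) sums_Suc_iff) simp
  hence "Phi t \<mu> = \<mu> * V + 1" using Phi_sums sums_unique2 by blast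
  thus ?thesis unfolding V_def by simp
qed

lemma Phi_near0:
  assumes R: "R \<ge> 0" and t: "0 < t" "t \<le> 1" and mu: "norm \<mu> \<le> R"
  shows "norm (Phi t \<mu> - 1) \<le> t powr \<beta> * (\<Sum>n. aseq (Cb 1) \<beta> qq (Suc n) * R ^ Suc n)"
proof -
  have one: "(1::real) > 0" by simp
  have sA: "summable (\<lambda>n. aseq (Cb 1) \<beta> qq (Suc n) * R ^ Suc n)"
    using aseqT_summable[OF one R] by (subst summable_Suc_iff)
  have "(\<lambda>n. complex_of_real (c (Suc n) t) * \<mu> ^ Suc n) sums (Phi t \<mu> - 1)"
    using Phi_sums[of t \<mu>] by (subst sums_Suc_iff) simp
  hence "Phi t \<mu> - 1 = (\<Sum>n. complex_of_real (c (Suc n) t) * \<mu> ^ Suc n)" by (simp add: sums_iff)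
  also have "norm \<dots> \<le> (\<Sum>n. t powr \<beta> * (aseq (Cb 1) \<beta> qq (Suc n) * R ^ Suc n))"
  proof (rule norm_suminf_le)
    show "summable (\<lambda>n. t powr \<beta> * (aseq (Cb 1) \<beta> qq (Suc n) * R ^ Suc n))"
      by (rule summable_mult[OF sA])
    fix n
    have an: "aseq (Cb 1) \<beta> qq (Suc n) \<ge> 0" using aseqT_nonneg[OF one] .
    have "norm (complex_of_real (c (Suc n) t) * \<mu> ^ Suc n) = \<bar>c (Suc n) t\<bar> * norm \<mu> ^ Suc n"
      by (simp add: norm_mult norm_power)
    also have "\<dots> \<le> (aseq (Cb 1) \<beta> qq (Suc n) * t powr (real (Suc n) * \<beta>)) * R ^ Suc n"
      using an by (intro mult_mono cbound[OF one t] power_mono mu) (auto simp del: aseq.simps)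
    also have "\<dots> \<le> (aseq (Cb 1) \<beta> qq (Suc n) * t powr \<beta>) * R ^ Suc n"
      using an t pq R by (intro mult_right_mono mult_left_mono powr_mono') auto
    finally show "norm (complex_of_real (c (Suc n) t) * \<mu> ^ Suc n) \<le> t powr \<beta> * (aseq (Cb 1) \<beta> qq (Suc n) * R ^ Suc n)"
      by (simp add: mult_ac)
  qed
  also have "\<dots> = t powr \<beta> * (\<Sum>n. aseq (Cb 1) \<beta> qq (Suc n) * R ^ Suc n)"
    by (rule suminf_mult[OF sA])
  finally show ?thesis .
qed

lemma Phi_unif:
  assumes K: "compact K"
  shows "uniform_limit K (\<lambda>t lam. Phi t (- lam)) (\<lambda>_. 1) (at_right 0)"
proof -
  obtain R0 where R0: "\<And>y. y \<in> K \<Longrightarrow> norm y \<le> R0"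
    using compact_imp_bounded[OF K] by (auto simp: bounded_iff)
  define R where "R = max R0 0"
  have R: "R \<ge> 0" "\<And>y. y \<in> K \<Longrightarrow> norm y \<le> R" using R0 unfolding R_def by force+
  define S where "S = (\<Sum>n. aseq (Cb 1) \<beta> qq (Suc n) * R ^ Suc n)"
  have one: "(1::real) > 0" by simp
  have sA: "summable (\<lambda>n. aseq (Cb 1) \<beta> qq (Suc n) * R ^ Suc n)"
    using aseqT_summable[OF one R(1)] by (subst summable_Suc_iff)
  have S0: "S \<ge> 0" unfolding S_def
  proof (rule suminf_nonneg[OF sA])
    fix n show "0 \<le> aseq (Cb 1) \<beta> qq (Suc n) * R ^ Suc n"
      using aseqT_nonneg[OF one, of "Suc n"] R(1) by (simp del: aseq.simps)
  qed
  show ?thesis unfolding uniform_limit_iff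
  proof (intro allI impI)
    fix e :: real assume e: "e > 0"
    define \<delta> where "\<delta> = min 1 ((e / (S + 1)) powr (1/\<beta>))"
    have d0: "\<delta> > 0" unfolding \<delta>_def using e S0 by simp
    show "\<forall>\<^sub>F t in at_right 0. \<forall>y\<in>K. dist (Phi t (- y)) 1 < e"
      unfolding eventually_at_right_field
    proof (intro exI[of _ \<delta>] conjI allI impI ballI)
      show "0 < \<delta>" by (rule d0)
      fix t y assume t: "0 < t" "t < \<delta>" and y: "y \<in> K"
      have t1: "t \<le> 1" using t unfolding \<delta>_def by simp
      have "t < (e / (S + 1)) powr (1/\<beta>)" using t unfolding \<delta>_def by simp
      hence "t powr \<beta> < ((e / (S + 1)) powr (1/\<beta>)) powr \<beta>"
        using t pq by (intro powr_less_mono2) auto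
      also have "\<dots> = e / (S + 1)" using pq e S0 by (simp add: powr_powr)
      finally have tb: "t powr \<beta> < e / (S + 1)" .
      have "dist (Phi t (- y)) 1 = norm (Phi t (- y) - 1)" by (simp add: dist_norm)
      also have "\<dots> \<le> t powr \<beta> * S" unfolding S_def
        by (rule Phi_near0[OF R(1) t(1) t1]) (use R(2)[OF y] in simp)
      also have "\<dots> \<le> e / (S + 1) * S" using tb S0 by (intro mult_right_mono) auto
      also have "\<dots> < e" using e S0 by (simp add: field_simps)
      finally show "dist (Phi t (- y)) 1 < e" .
    qed
  qed
qed

lemma Phi_sol: "volterra_sol k lam (\<lambda>t. Phi t (- lam))"
  unfolding volterra_sol_def
proof (intro conjI allI impI)
  fix T :: real assume T: "T > 0"
  show "Bb T (\<lambda>t. Phi t (- lam))" unfolding Bb_def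
  proof
    show "(\<lambda>t. Phi t (- lam)) \<in> borel_measurable (restrict_space borel {0..T})"
      by (rule measurable_restrict_space1) simp
    show "bounded ((\<lambda>t. Phi t (- lam)) ` {0..T})"
      unfolding bounded_iff
    proof (intro exI ballI)
      fix y assume "y \<in> (\<lambda>t. Phi t (- lam)) ` {0..T}"
      then obtain x where x: "x \<in> {0..T}" "y = Phi x (- lam)" by auto
      show "norm y \<le> (\<Sum>n. aseq (Cb T) \<beta> qq n * (T powr \<beta> * norm (- lam)) ^ n)"
        unfolding x(2) by (rule Phi_bound[OF T]) (use x in simp)
    qed
  qed
next
  show "Phi 0 (- lam) = 1" by (rule Phi_nonpos) simp
next
  fix t :: real assume t: "t > 0"
  show "Phi t (- lam) = 1 - lam * volterra_int k (\<lambda>t. Phi t (- lam)) t"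
    unfolding vi_eq using Phi_eq[OF t, of "- lam"] by simp
qed

lemma Phi_unique:
  assumes sol: "volterra_sol k lam \<psi>" and t0: "T \<ge> 0"
  shows "\<psi> T = Phi T (- lam)"
proof (cases "T = 0")
  case True
  thus ?thesis using sol Phi_nonpos[of 0] unfolding volterra_sol_def by simp
next
  case False
  hence T: "T > 0" using t0 by simp
  define \<mu> where "\<mu> = - lam"
  have BbT: "Bb T \<psi>" and eq\<psi>: "\<And>t. t > 0 \<Longrightarrow> \<psi> t = 1 - lam * volterra_int k \<psi> t"
    using sol T unfolding volterra_sol_def by auto
  obtain M1 where M1: "\<And>s. s \<in> {0..T} \<Longrightarrow> norm (\<psi> s) \<le> M1"
    using BbT unfolding Bb_def bounded_iff by (auto simp del: atLeastAtMost_iff)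
  define PB where "PB = (\<Sum>n. aseq (Cb T) \<beta> qq n * (T powr \<beta> * norm \<mu>) ^ n)"
  define \<psi>' where "\<psi>' s = indicator {0..T} s *\<^sub>R \<psi> s" for s
  have \<psi>'m: "\<psi>' \<in> borel_measurable borel"
    using borel_measurable_restrict_space_iff[THEN iffD1, of "{0..T}" borel \<psi>] BbT
    unfolding Bb_def \<psi>'_def by auto
  define d where "d s = \<psi>' s - Phi s \<mu>" for s
  have dm: "d \<in> borel_measurable lborel" unfolding d_def using \<psi>'m by simp
  define M where "M = M1 + PB"
  have dM: "norm (d s) \<le> M" if "0 < s" "s \<le> T" for s
  proof -
    have "norm (d s) \<le> norm (\<psi> s) + norm (Phi s \<mu>)" unfolding d_def \<psi>'_def
      using that by (simp add: norm_triangle_ineq4)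
    also have "\<dots> \<le> M" unfolding M_def PB_def
      using M1[of s] Phi_bound[OF T that(2), of \<mu>] that by (intro add_mono) auto
    finally show ?thesis .
  qed
  have M0: "M \<ge> 0" using dM[OF T order.refl] by (meson norm_ge_zero order.trans)
  have dint: "integrable lborel (\<lambda>s. complex_of_real (kk t s) * d s)"
    and deq: "d t = - lam * (\<integral>s. complex_of_real (kk t s) * d s \<partial>lborel)"
    if t: "0 < t" "t \<le> T" for t
  proof -
    have r0: "(0::real) \<le> 0" by simp
    have i1: "integrable lborel (\<lambda>s. kk t s *\<^sub>R \<psi>' s)"
      apply (rule kk_int_bound(1)[OF T t r0, of "max M1 0" \<psi>'])
      subgoal by simp
      subgoal using \<psi>'m by simp
      subgoal for s using M1[of s] t by (simp add: \<psi>'_def)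
      done
    have PB0: "PB \<ge> 0" using Phi_bound[OF T t(2), of \<mu>] unfolding PB_def by (meson norm_ge_zero order.trans)
    have i2: "integrable lborel (\<lambda>s. kk t s *\<^sub>R Phi s \<mu>)"
      by (rule kk_int_bound(1)[OF T t r0 PB0]) (use Phi_bound[OF T] t in \<open>auto simp: PB_def\<close>)
    have e1: "complex_of_real (kk t s) * \<psi> s = complex_of_real (kk t s) * \<psi>' s" for s
      using t by (auto simp: kk_def \<psi>'_def indicator_def)
    have "\<psi> t = 1 - lam * (\<integral>s. complex_of_real (kk t s) * \<psi>' s \<partial>lborel)"
      using eq\<psi>[OF t(1)] unfolding vi_eq e1 .
    moreover have "Phi t \<mu> = 1 - lam * (\<integral>s. complex_of_real (kk t s) * Phi s \<mu> \<partial>lborel)"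
      using Phi_eq[OF t(1), of \<mu>] unfolding \<mu>_def by simp
    moreover have "\<psi>' t = \<psi> t" using t by (simp add: \<psi>'_def)
    moreover have i1': "integrable lborel (\<lambda>s. complex_of_real (kk t s) * \<psi>' s)"
      using i1 by (simp add: scaleR_conv_of_real)
    moreover have i2': "integrable lborel (\<lambda>s. complex_of_real (kk t s) * Phi s \<mu>)"
      using i2 by (simp add: scaleR_conv_of_real)
    ultimately show "d t = - lam * (\<integral>s. complex_of_real (kk t s) * d s \<partial>lborel)"
      unfolding d_def by (simp add: right_diff_distrib algebra_simps)
    show "integrable lborel (\<lambda>s. complex_of_real (kk t s) * d s)"
      unfolding d_def using i1' i2' by (simp add: right_diff_distrib)
  qed
  have ind: "\<And>t. 0 < t \<Longrightarrow> t \<le> T \<Longrightarrow> norm (d t) \<le> M * (norm lam ^ n * aseq (Cb T) \<beta> qq n) * t powr (real n * \<beta>)" for n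
  proof (induction n)
    case 0 thus ?case using dM by simp
  next
    case (Suc n t)
    have r: "real n * \<beta> \<ge> 0" using pq by simp
    have an: "M * (norm lam ^ n * aseq (Cb T) \<beta> qq n) \<ge> 0" using M0 aseqT_nonneg[OF T, of n] by simp
    have "norm (d t) = norm lam * norm (\<integral>s. kk t s *\<^sub>R d s \<partial>lborel)"
      using deq[OF Suc.prems] by (simp add: norm_mult scaleR_conv_of_real)
    also have "\<dots> \<le> norm lam * (M * (norm lam ^ n * aseq (Cb T) \<beta> qq n) *
        (Cb T * t powr (real n * \<beta> + \<beta>) * (real n * \<beta> * qq + 1) powr (-1/qq)))"
      by (intro mult_left_mono kk_int_bound(2)[OF T Suc.prems r an dm]) (use Suc.IH Suc.prems in auto)
    also have "\<dots> = M * (norm lam ^ Suc n * aseq (Cb T) \<beta> qq (Suc n)) * t powr (real (Suc n) * \<beta>)"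
      by (simp add: algebra_simps)
    finally show ?case .
  qed
  have lim: "(\<lambda>n. M * (aseq (Cb T) \<beta> qq n * (T powr \<beta> * norm lam) ^ n)) \<longlonglongrightarrow> M * 0"
    by (intro tendsto_mult tendsto_const summable_LIMSEQ_zero aseqT_summable[OF T]) simp
  have bn: "norm (d T) \<le> M * (aseq (Cb T) \<beta> qq n * (T powr \<beta> * norm lam) ^ n)" for n
  proof -
    have "norm (d T) \<le> M * (norm lam ^ n * aseq (Cb T) \<beta> qq n) * T powr (real n * \<beta>)"
      by (rule ind[OF T order.refl])
    also have "T powr (real n * \<beta>) = (T powr \<beta>) ^ n" using T by (simp add: powr_power)
    finally show ?thesis by (simp add: power_mult_distrib mult_ac)
  qed
  have "norm (d T) \<le> M * 0"
    by (rule LIMSEQ_le_const[OF lim]) (use bn in auto)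
  hence "d T = 0" by simp
  thus ?thesis unfolding d_def \<psi>'_def \<mu>_def using T by simp
qed

end

theorem corollary3p1:
  fixes k :: "real \<Rightarrow> real \<Rightarrow> real"
  assumes meas: "(\<lambda>p. k (fst p) (snd p)) \<in> borel_measurable (restrict_space borel ({0<..} \<times> {0<..}))"
    and growth: "\<exists>\<alpha> \<epsilon>. 0 \<le> \<alpha> \<and> \<alpha> < 1 \<and> \<epsilon> > 0 \<and>
       (\<forall>T>0. \<exists>C. \<forall>t\<in>{0<..T}.
          set_integrable lborel {0<..<t} (\<lambda>s. \<bar>k t s\<bar> powr (1 + \<epsilon>)) \<and>
          t powr (\<alpha> - 1 / (1 + \<epsilon>)) *
            (set_lebesgue_integral lborel {0<..<t} (\<lambda>s. \<bar>k t s\<bar> powr (1 + \<epsilon>))) powr (1 / (1 + \<epsilon>))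
          \<le> C)"
  shows "\<exists>\<Phi> :: real \<Rightarrow> complex \<Rightarrow> complex.
     (\<forall>lam. volterra_sol k lam (\<lambda>t. \<Phi> t (- lam))) \<and>
     (\<forall>lam \<psi>. volterra_sol k lam \<psi> \<longrightarrow> (\<forall>t\<ge>0. \<psi> t = \<Phi> t (- lam))) \<and>
     (\<forall>K. compact K \<longrightarrow> uniform_limit K (\<lambda>t lam. \<Phi> t (- lam)) (\<lambda>_. 1) (at_right 0)) \<and>
     (\<forall>t\<ge>0. \<Phi> t holomorphic_on UNIV) \<and>
     (\<forall>t\<ge>0. \<forall>\<mu>. (\<lambda>n. complex_of_real (coeff_c k n t) * \<mu> ^ n) sums \<Phi> t \<mu>)"
proof -
  from growth obtain \<alpha> \<epsilon> where a: "0 \<le> \<alpha>" "\<alpha> < 1" "\<epsilon> > 0" and g: "\<forall>T>0. \<exists>C. \<forall>t\<in>{0<..T}.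
          set_integrable lborel {0<..<t} (\<lambda>s. \<bar>k t s\<bar> powr (1 + \<epsilon>)) \<and>
          t powr (\<alpha> - 1 / (1 + \<epsilon>)) *
            (set_lebesgue_integral lborel {0<..<t} (\<lambda>s. \<bar>k t s\<bar> powr (1 + \<epsilon>))) powr (1 / (1 + \<epsilon>))
          \<le> C" by blast
  interpret V: volt k \<alpha> \<epsilon>
    by unfold_locales (use meas a g in auto)
  show ?thesis
  proof (intro exI[of _ V.Phi] conjI allI impI)
    show "volterra_sol k lam (\<lambda>t. V.Phi t (- lam))" for lam by (rule V.Phi_sol)
    show "\<psi> t = V.Phi t (- lam)" if "volterra_sol k lam \<psi>" "t \<ge> 0" for lam \<psi> t
      by (rule V.Phi_unique[OF that])
    show "uniform_limit K (\<lambda>t lam. V.Phi t (- lam)) (\<lambda>_. 1) (at_right 0)" if "compact K" for K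
      by (rule V.Phi_unif[OF that])
    show "V.Phi t holomorphic_on UNIV" for t by (rule V.Phi_holo)
    show "(\<lambda>n. complex_of_real (coeff_c k n t) * \<mu> ^ n) sums V.Phi t \<mu>" for t \<mu> by (rule V.Phi_sums)
  qed
qed

end
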